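(* For every integer $n \geq 1$, the number $R(n)$ of Riordan paths of length $n$ satisfies $$R(n) = \sum_{k=1}^{\lfloor n/2 \rfloor} f^{(k,k,1^{n-2k})}.$$
   Context: A Motzkin path of length $n$ is a lattice path from $(0,0)$ to $(n,0)$ using steps $U=(1,1)$, $F=(1,0)$, $D=(1,-1)$ that never goes below the $x$-axis. A Riordan path is a Motzkin path with no flat step $F$ on the $x$-axis. $R(n)$ is the number of Riordan paths of length $n$ (the Riordan numbers). $f^\mu$ denotes the number of standard Young tableaux of shape $\mu$, and $(k,k,1^{j})$ is the partition with two parts equal to $k$ followed by $j$ parts equal to $1$. *)

theory Defs
  imports Main
begin

datatype step = U | F | D

fun step_val :: "step \<Rightarrow> int" where
  "step_val U = 1" | "step_val F = 0" | "step_val D = -1"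

definition height :: "step list \<Rightarrow> nat \<Rightarrow> int" where
  "height p i = (\<Sum>j<i. step_val (p ! j))"

definition motzkin_path :: "step list \<Rightarrow> bool" where
  "motzkin_path p \<longleftrightarrow> (\<forall>i\<le>length p. height p i \<ge> 0) \<and> height p (length p) = 0"

text \<open>Riordan path: Motzkin path with no flat step on the x-axis
  (a flat step lies on the axis iff it starts at height 0).\<close>
definition riordan_path :: "step list \<Rightarrow> bool" where
  "riordan_path p \<longleftrightarrow> motzkin_path p \<and>
     (\<forall>i<length p. p ! i = F \<longrightarrow> height p i \<noteq> 0)"

definition riordan_num :: "nat \<Rightarrow> nat" where
  "riordan_num n = card {p. length p = n \<and> riordan_path p}"

definition young_diagram :: "nat list \<Rightarrow> (nat \<times> nat) set" where
  "young_diagram mu = {(i, j). i < length mu \<and> j < mu ! i}"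

definition syt :: "nat list \<Rightarrow> ((nat \<times> nat) \<Rightarrow> nat) \<Rightarrow> bool" where
  "syt mu T \<longleftrightarrow>
     bij_betw T (young_diagram mu) {1..sum_list mu} \<and>
     (\<forall>c. c \<notin> young_diagram mu \<longrightarrow> T c = 0) \<and>
     (\<forall>i j. (i, Suc j) \<in> young_diagram mu \<longrightarrow> T (i, j) < T (i, Suc j)) \<and>
     (\<forall>i j. (Suc i, j) \<in> young_diagram mu \<longrightarrow> T (i, j) < T (Suc i, j))"

definition num_syt :: "nat list \<Rightarrow> nat" where
  "num_syt mu = card {T. syt mu T}"

end

theory Submission
  imports Defs "HOL-Library.FuncSet"
begin

lemma syt_zero: "syt mu T \<Longrightarrow> d \<notin> young_diagram mu \<Longrightarrow> T d = 0"
  unfolding syt_def by (cases d) auto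

lemma fin_Y: "finite (young_diagram mu)"
proof -
  have "young_diagram mu \<subseteq> {..<length mu} \<times> {..<sum_list mu}"
    unfolding young_diagram_def using elem_le_sum_list by fastforce
  then show ?thesis by (rule finite_subset) auto
qed

lemma fin_syt: "finite {T. syt mu T}"
proof -
  have "{T. syt mu T} \<subseteq> {f. \<forall>x. (x \<in> young_diagram mu \<longrightarrow> f x \<in> {1..sum_list mu}) \<and> (x \<notin> young_diagram mu \<longrightarrow> f x = 0)}"
    unfolding syt_def bij_betw_def by auto
  then show ?thesis
    by (rule finite_subset) (rule finite_set_of_finite_funs[OF fin_Y], simp)
qed

lemma max_cell:
  assumes "syt mu T" "c \<in> young_diagram mu" "T c = sum_list mu" "c = (i, x)"
  shows "(i, Suc x) \<notin> young_diagram mu" "(Suc i, x) \<notin> young_diagram mu"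
proof -
  have b: "bij_betw T (young_diagram mu) {1..sum_list mu}" using assms(1) by (simp add: syt_def)
  show "(i, Suc x) \<notin> young_diagram mu"
  proof
    assume h: "(i, Suc x) \<in> young_diagram mu"
    then have "T (i, x) < T (i, Suc x)" using assms(1) by (simp add: syt_def)
    moreover have "T (i, Suc x) \<le> sum_list mu" using b h by (auto simp: bij_betw_def)
    ultimately show False using assms by simp
  qed
  show "(Suc i, x) \<notin> young_diagram mu"
  proof
    assume h: "(Suc i, x) \<in> young_diagram mu"
    then have "T (i, x) < T (Suc i, x)" using assms(1) by (simp add: syt_def)
    moreover have "T (Suc i, x) \<le> sum_list mu" using b h by (auto simp: bij_betw_def)
    ultimately show False using assms by simp
  qed
qed

lemma diag_update:
  assumes "i < length mu" "mu ! i > 0"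
  shows "young_diagram (mu[i := mu!i - 1]) = young_diagram mu - {(i, mu!i - 1)}"
  using assms unfolding young_diagram_def by (auto simp: nth_list_update split: if_splits)

lemma sum_list_upd_nat:
  "i < length xs \<Longrightarrow> sum_list (xs[i := v]) + xs ! i = sum_list xs + (v::nat)"
proof (induction xs arbitrary: i)
  case (Cons a xs) then show ?case by (cases i) auto
qed simp

lemma sum_update:
  fixes mu :: "nat list"
  assumes "i < length mu" "mu ! i > 0"
  shows "sum_list (mu[i := mu!i - 1]) = sum_list mu - 1"
proof -
  have "sum_list (mu[i := mu!i - 1]) + mu!i = sum_list mu + (mu!i - 1)"
    using assms(1) by (simp add: sum_list_upd_nat)
  then show ?thesis using assms(2) by simp
qed

lemma remove_corner:
  assumes i: "i < length mu" "mu ! i > 0"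
    and x: "x = mu ! i - 1" and cor: "(Suc i, x) \<notin> young_diagram mu"
  shows "card {T. syt mu T \<and> T (i, x) = sum_list mu} = num_syt (mu[i := x])"
proof -
  define Y where "Y = young_diagram mu"
  define N where "N = sum_list mu"
  define c where "c = (i, x)"
  define mu' where "mu' = mu[i := x]"
  have Y': "young_diagram mu' = Y - {c}" unfolding mu'_def Y_def c_def x using diag_update[OF i] by simp
  have N': "sum_list mu' = N - 1" unfolding mu'_def N_def x using sum_update[OF i] by simp
  have cY: "c \<in> Y" unfolding Y_def c_def young_diagram_def x using i by auto
  have N1: "N \<ge> 1" using elem_le_sum_list[OF i(1)] i(2) unfolding N_def by simp
  have right: "(i, Suc x) \<notin> Y" unfolding Y_def young_diagram_def x by auto
  have eq: "{T. syt mu T \<and> T c = N} = (\<lambda>T'. T'(c := N)) ` {T'. syt mu' T'}"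
  proof (intro equalityI subsetI)
    fix T assume "T \<in> {T. syt mu T \<and> T c = N}"
    then have s: "syt mu T" and Tc: "T c = N" by auto
    have b: "bij_betw T Y {1..N}" using s by (simp add: syt_def Y_def N_def)
    have pos: "\<And>d. d \<in> Y \<Longrightarrow> T d \<ge> 1" using b by (auto simp: bij_betw_def)
    define T' where "T' = T(c := 0)"
    have "bij_betw T (Y - {c}) ({1..N} - {N})"
      using bij_betw_DiffI[OF b, of "{c}" "{N}"] cY Tc N1 by (auto simp: bij_betw_def)
    moreover have "{1..N} - {N} = {1..N-1}" using N1 by auto
    ultimately have "bij_betw T' (Y - {c}) {1..N-1}"
      by (metis (no_types, lifting) T'_def Diff_iff bij_betw_cong fun_upd_other singletonI)
    moreover have "\<forall>d. d \<notin> Y - {c} \<longrightarrow> T' d = 0"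
      using s unfolding T'_def syt_def Y_def by auto
    moreover have "\<forall>a b. (a, Suc b) \<in> Y - {c} \<longrightarrow> T' (a, b) < T' (a, Suc b)"
    proof (intro allI impI)
      fix a b assume h: "(a, Suc b) \<in> Y - {c}"
      have "T (a, b) < T (a, Suc b)" using s h unfolding syt_def Y_def by auto
      moreover have "T (a, Suc b) \<ge> 1" using pos h by auto
      ultimately show "T' (a, b) < T' (a, Suc b)" using h unfolding T'_def by auto
    qed
    moreover have "\<forall>a b. (Suc a, b) \<in> Y - {c} \<longrightarrow> T' (a, b) < T' (Suc a, b)"
    proof (intro allI impI)
      fix a b assume h: "(Suc a, b) \<in> Y - {c}"
      have "T (a, b) < T (Suc a, b)" using s h unfolding syt_def Y_def by auto
      moreover have "T (Suc a, b) \<ge> 1" using pos h by auto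
      ultimately show "T' (a, b) < T' (Suc a, b)" using h unfolding T'_def by auto
    qed
    ultimately have "syt mu' T'" unfolding syt_def Y' N' by blast
    moreover have "T = T'(c := N)" unfolding T'_def using Tc by auto
    ultimately show "T \<in> (\<lambda>T'. T'(c := N)) ` {T'. syt mu' T'}" by blast
  next
    fix T assume "T \<in> (\<lambda>T'. T'(c := N)) ` {T'. syt mu' T'}"
    then obtain T' where s: "syt mu' T'" and T: "T = T'(c := N)" by auto
    have b: "bij_betw T' (Y - {c}) {1..N-1}" using s by (simp add: syt_def Y' N')
    have le: "\<And>d. T' d \<le> N - 1"
    proof -
      fix d show "T' d \<le> N - 1"
      proof (cases "d \<in> Y - {c}")
        case True
        then have "T' d \<in> {1..N-1}" using b by (auto simp: bij_betw_def)
        then show ?thesis by simp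
      next
        case False
        then have "T' d = 0" using s Y' unfolding syt_def by (cases d) auto
        then show ?thesis by simp
      qed
    qed
    have "c \<notin> young_diagram mu'" using Y' by simp
    then have T'c: "T' c = 0" using s unfolding syt_def by blast
    have "bij_betw T (Y - {c}) {1..N-1}"
      using b T by (metis (no_types, lifting) Diff_iff bij_betw_cong fun_upd_other singletonI)
    then have "bij_betw T ((Y - {c}) \<union> {c}) ({1..N-1} \<union> {T c})"
      by (rule notIn_Un_bij_betw[rotated 2]) (use T N1 in auto)
    moreover have "(Y - {c}) \<union> {c} = Y" using cY by auto
    moreover have "{1..N-1} \<union> {T c} = {1..N}" using T N1 by auto
    ultimately have b2: "bij_betw T Y {1..N}" by simp
    have z: "\<forall>d. d \<notin> Y \<longrightarrow> T d = 0"
    proof (intro allI impI)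
      fix d assume "d \<notin> Y"
      then have "d \<noteq> c" "d \<notin> young_diagram mu'" using cY Y' by auto
      then show "T d = 0" using s T unfolding syt_def by (cases d) auto
    qed
    have r: "\<forall>a b. (a, Suc b) \<in> Y \<longrightarrow> T (a, b) < T (a, Suc b)"
    proof (intro allI impI)
      fix a b assume h: "(a, Suc b) \<in> Y"
      show "T (a, b) < T (a, Suc b)"
      proof (cases "(a, Suc b) = c")
        case True
        then have "(a, b) \<noteq> c" by auto
        then show ?thesis using True T le[of "(a,b)"] N1 by auto
      next
        case False
        have "(a, b) \<noteq> c" using h right unfolding c_def by auto
        moreover have "(a, Suc b) \<in> young_diagram mu'" using h False Y' by auto
        ultimately show ?thesis using s T False unfolding syt_def by auto
      qed
    qed
    have co: "\<forall>a b. (Suc a, b) \<in> Y \<longrightarrow> T (a, b) < T (Suc a, b)"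
    proof (intro allI impI)
      fix a b assume h: "(Suc a, b) \<in> Y"
      show "T (a, b) < T (Suc a, b)"
      proof (cases "(Suc a, b) = c")
        case True
        then have "(a, b) \<noteq> c" by auto
        then show ?thesis using True T le[of "(a,b)"] N1 by auto
      next
        case False
        have "(a, b) \<noteq> c" using h cor unfolding c_def Y_def by auto
        moreover have "(Suc a, b) \<in> young_diagram mu'" using h False Y' by auto
        ultimately show ?thesis using s T False unfolding syt_def by auto
      qed
    qed
    have "syt mu T" unfolding syt_def using b2 z r co unfolding Y_def N_def by blast
    then show "T \<in> {T. syt mu T \<and> T c = N}" using T by simp
  qed
  have inj: "inj_on (\<lambda>T'. T'(c := N)) {T'. syt mu' T'}"
  proof (rule inj_onI)
    fix T1 T2 assume h1: "T1 \<in> {T'. syt mu' T'}" and h2: "T2 \<in> {T'. syt mu' T'}"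
      and e: "T1(c := N) = T2(c := N)"
    have "c \<notin> young_diagram mu'" using Y' by simp
    then have "T1 c = 0" "T2 c = 0" using h1 h2 syt_zero by auto
    then show "T1 = T2" using e by (metis fun_upd_triv fun_upd_upd)
  qed
  have "card {T. syt mu T \<and> T c = N} = num_syt mu'"
    unfolding eq num_syt_def using card_image[OF inj] .
  then show ?thesis unfolding c_def N_def mu'_def .
qed

lemma corner_sum:
  assumes N1: "sum_list mu \<ge> 1"
  shows "num_syt mu = (\<Sum>i<length mu. if 0 < mu!i \<and> (Suc i, mu!i - 1) \<notin> young_diagram mu
            then num_syt (mu[i := mu!i - 1]) else 0)"
proof -
  define Y where "Y = young_diagram mu"
  define N where "N = sum_list mu"
  define S where "S c = {T. syt mu T \<and> T c = N}" for c
  have un: "{T. syt mu T} = (\<Union>c\<in>Y. S c)"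
  proof (intro equalityI subsetI)
    fix T assume "T \<in> {T. syt mu T}"
    then have s: "syt mu T" by simp
    then have "T ` Y = {1..N}" unfolding syt_def Y_def N_def bij_betw_def by simp
    moreover have "N \<in> {1..N}" using N1 unfolding N_def by simp
    ultimately obtain c where "c \<in> Y" "T c = N" by (metis imageE)
    then show "T \<in> (\<Union>c\<in>Y. S c)" using s unfolding S_def by auto
  qed (auto simp: S_def)
  have finS: "\<And>c. finite (S c)"
    by (rule finite_subset[OF _ fin_syt[of mu]]) (auto simp: S_def)
  have disj: "\<forall>c\<in>Y. \<forall>d\<in>Y. c \<noteq> d \<longrightarrow> S c \<inter> S d = {}"
  proof (intro ballI impI)
    fix c d assume "c \<in> Y" "d \<in> Y" "c \<noteq> d"
    then show "S c \<inter> S d = {}" unfolding S_def syt_def bij_betw_def inj_on_def Y_def by auto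
  qed
  have "num_syt mu = (\<Sum>c\<in>Y. card (S c))"
    unfolding num_syt_def un using card_UN_disjoint[OF _ _ disj] fin_Y finS unfolding Y_def by blast
  also have "Y = Sigma {..<length mu} (\<lambda>i. {..<mu!i})" unfolding Y_def young_diagram_def by auto
  also have "(\<Sum>c\<in>Sigma {..<length mu} (\<lambda>i. {..<mu!i}). card (S c))
      = (\<Sum>i<length mu. \<Sum>x<mu!i. card (S (i, x)))"
    by (subst sum.Sigma) auto
  also have "\<dots> = (\<Sum>i<length mu. if 0 < mu!i \<and> (Suc i, mu!i - 1) \<notin> young_diagram mu
            then num_syt (mu[i := mu!i - 1]) else 0)"
  proof (rule sum.cong[OF refl])
    fix i assume i: "i \<in> {..<length mu}"
    have zero: "card (S (i, x)) = 0" if "(i, Suc x) \<in> Y \<or> (Suc i, x) \<in> Y" "x < mu ! i" for x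
    proof -
      have "S (i, x) = {}"
      proof (rule ccontr)
        assume "S (i, x) \<noteq> {}"
        then obtain T where "syt mu T" "T (i, x) = N" unfolding S_def by auto
        moreover have "(i, x) \<in> Y"
          using that i unfolding Y_def young_diagram_def by auto
        ultimately show False using max_cell[of mu T "(i,x)" i x] that unfolding Y_def N_def by auto
      qed
      then show ?thesis by simp
    qed
    show "(\<Sum>x<mu!i. card (S (i, x))) = (if 0 < mu!i \<and> (Suc i, mu!i - 1) \<notin> young_diagram mu
            then num_syt (mu[i := mu!i - 1]) else 0)"
    proof (cases "mu ! i")
      case 0 then show ?thesis by simp
    next
      case (Suc m)
      have "(\<Sum>x<m. card (S (i, x))) = 0"
      proof (rule sum.neutral, rule ballI)
        fix x assume "x \<in> {..<m}"
        then have "(i, Suc x) \<in> Y" using i Suc unfolding Y_def young_diagram_def by auto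
        then show "card (S (i, x)) = 0" by (intro zero) (use \<open>x \<in> {..<m}\<close> Suc in auto)
      qed
      moreover have "card (S (i, m)) = (if (Suc i, m) \<notin> Y then num_syt (mu[i := m]) else 0)"
      proof (cases "(Suc i, m) \<in> Y")
        case True
        have "card (S (i, m)) = 0" by (intro zero) (use True Suc in auto)
        then show ?thesis using True by simp
      next
        case False
        have "card {T. syt mu T \<and> T (i, m) = sum_list mu} = num_syt (mu[i := m])"
          by (rule remove_corner) (use i Suc False in \<open>auto simp: Y_def\<close>)
        then show ?thesis using False by (simp add: S_def N_def)
      qed
      ultimately have "(\<Sum>x<mu!i. card (S (i, x))) = (if (Suc i, m) \<notin> Y then num_syt (mu[i := m]) else 0)"
        using Suc by simp
      moreover have "(if 0 < mu!i \<and> (Suc i, mu!i - 1) \<notin> young_diagram mu then num_syt (mu[i := mu!i - 1]) else 0)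
         = (if (Suc i, m) \<notin> Y then num_syt (mu[i := m]) else 0)"
        using Suc unfolding Y_def by simp
      ultimately show ?thesis by simp
    qed
  qed
  finally show ?thesis .
qed

lemma yd_mem: "(i, j) \<in> young_diagram mu \<longleftrightarrow> i < length mu \<and> j < mu ! i"
  unfolding young_diagram_def by simp

lemma num_syt_snoc0: "num_syt (xs @ [0]) = num_syt xs"
proof -
  have "young_diagram (xs @ [0]) = young_diagram xs"
    unfolding young_diagram_def by (auto simp: nth_append less_Suc_eq split: if_splits)
  moreover have "sum_list (xs @ [0]) = sum_list xs" by simp
  ultimately show ?thesis unfolding num_syt_def syt_def by simp
qed

lemma num_syt_00: "num_syt [0, 0] = 1"
proof -
  have "young_diagram [0,0] = {}" unfolding young_diagram_def by (auto simp: nth_Cons')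
  then have "{T. syt [0,0] T} = {\<lambda>_. 0}" unfolding syt_def by (auto simp: bij_betw_def)
  then show ?thesis unfolding num_syt_def by simp
qed

lemma num_syt_row: "num_syt [Suc a, 0] = num_syt [a, 0]"
proof -
  have "num_syt [Suc a, 0] = (\<Sum>i<Suc (Suc 0). if 0 < [Suc a, 0]!i \<and> (Suc i, [Suc a, 0]!i - 1) \<notin> young_diagram [Suc a, 0]
            then num_syt ([Suc a, 0][i := [Suc a, 0]!i - 1]) else 0)"
    using corner_sum[of "[Suc a, 0]"] by (simp only: list.size) simp
  also have "\<dots> = num_syt [a, 0]"
    by (simp only: sum.lessThan_Suc_shift) (simp add: yd_mem)
  finally show ?thesis .
qed

lemma num_syt_row1: "num_syt [a, 0] = 1"
  by (induction a) (simp_all add: num_syt_00 num_syt_row)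

lemma shape_rec:
  assumes b: "1 \<le> b" "b \<le> a"
  shows "num_syt ([a, b] @ replicate j 1) =
     (if b < a then num_syt ([a-1, b] @ replicate j 1) else 0)
   + (if 2 \<le> b \<or> j = 0 then num_syt ([a, b-1] @ replicate j 1) else 0)
   + (if 1 \<le> j then num_syt ([a, b] @ replicate (j-1) 1) else 0)"
proof -
  define mu where "mu = [a, b] @ replicate j 1"
  define f where "f i = (if 0 < mu!i \<and> (Suc i, mu!i - 1) \<notin> young_diagram mu
            then num_syt (mu[i := mu!i - 1]) else 0)" for i
  have len: "length mu = Suc (Suc j)" unfolding mu_def by simp
  have "num_syt mu = (\<Sum>i<Suc (Suc j). f i)"
    using corner_sum[of mu] b len unfolding f_def mu_def by simp
  also have "\<dots> = f 0 + f 1 + (\<Sum>i<j. f (Suc (Suc i)))"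
    by (simp only: sum.lessThan_Suc_shift) simp
  also have "f 0 = (if b < a then num_syt ([a-1, b] @ replicate j 1) else 0)"
    using b unfolding f_def mu_def by (auto simp: young_diagram_def)
  also have "f 1 = (if 2 \<le> b \<or> j = 0 then num_syt ([a, b-1] @ replicate j 1) else 0)"
    using b unfolding f_def mu_def by (auto simp: young_diagram_def nth_append)
  also have "(\<Sum>i<j. f (Suc (Suc i))) = (if 1 \<le> j then num_syt ([a, b] @ replicate (j-1) 1) else 0)"
  proof (cases j)
    case 0 then show ?thesis by simp
  next
    case (Suc j')
    have z: "f (Suc (Suc i)) = 0" if "i < j'" for i
    proof -
      have "mu ! Suc (Suc i) = 1" "mu ! Suc (Suc (Suc i)) = 1" "Suc (Suc (Suc i)) < length mu"
        using that Suc unfolding mu_def by (auto simp: nth_Cons')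
      then show ?thesis unfolding f_def by (simp add: yd_mem)
    qed
    have "mu[Suc (Suc j') := 0] = ([a, b] @ replicate j' 1) @ [0]"
      unfolding mu_def Suc by (simp add: replicate_append_same[symmetric] list_update_append)
    moreover have "mu ! Suc (Suc j') = 1" "length mu = Suc (Suc (Suc j'))"
      using Suc unfolding mu_def by (auto simp: nth_Cons')
    ultimately have "f (Suc (Suc j')) = num_syt ([a, b] @ replicate j' 1)"
      unfolding f_def using num_syt_snoc0[of "[a, b] @ replicate j' 1"] by (simp add: yd_mem)
    then show ?thesis using z Suc by simp
  qed
  finally show ?thesis unfolding mu_def .
qed

fun Pn :: "nat \<Rightarrow> nat \<Rightarrow> nat" where
  "Pn 0 h = (if h = 0 then 1 else 0)"
| "Pn (Suc m) h = Pn m (Suc h) + (if 0 < h then Pn m h + Pn m (h - 1) else 0)"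

fun Q1 :: "nat \<Rightarrow> nat \<Rightarrow> nat" where
  "Q1 0 h = 0"
| "Q1 (Suc m) h = (if 0 < h then Q1 m (h - 1) else 0) + (if m = Suc h then 1 else 0) + Q1 m (Suc h) + Q1 m h"

lemma PQ: "Pn m h = (if m = h then 1 else 0) + Q1 m h + (if 0 < h then Q1 m (h - 1) else 0)"
proof (induction m arbitrary: h)
  case 0 then show ?case by simp
next
  case (Suc m)
  show ?case
  proof (cases h)
    case 0 then show ?thesis using Suc.IH[of 1] by simp
  next
    case (Suc h')
    then show ?thesis using Suc.IH[of "Suc (Suc h')"] Suc.IH[of "Suc h'"] Suc.IH[of h']
      by (cases h') auto
  qed
qed

definition Tt :: "nat \<Rightarrow> nat \<Rightarrow> nat \<Rightarrow> nat" where
  "Tt m h b = (if 1 \<le> b \<and> 2*b + h \<le> m then num_syt ([b+h, b] @ replicate (m - h - 2*b) 1) else 0)"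

lemma Tt_rec:
  assumes "1 \<le> b"
  shows "Tt (Suc m) h b = (if 0 < h then Tt m (h-1) b else 0) + (if 2 \<le> b then Tt m (Suc h) (b-1) else 0)
     + (if b = 1 \<and> m = Suc h then 1 else 0) + Tt m h b"
proof (cases "2*b + h \<le> Suc m")
  case False
  then show ?thesis unfolding Tt_def by auto
next
  case True
  define j where "j = Suc m - h - 2*b"
  have sr: "num_syt ([b+h, b] @ replicate j 1) =
     (if b < b+h then num_syt ([b+h-1, b] @ replicate j 1) else 0)
   + (if 2 \<le> b \<or> j = 0 then num_syt ([b+h, b-1] @ replicate j 1) else 0)
   + (if 1 \<le> j then num_syt ([b+h, b] @ replicate (j-1) 1) else 0)"
    by (rule shape_rec) (use assms in auto)
  have L: "Tt (Suc m) h b = num_syt ([b+h, b] @ replicate j 1)"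
    unfolding Tt_def j_def using True assms by simp
  have t1: "(if b < b+h then num_syt ([b+h-1, b] @ replicate j 1) else 0) = (if 0 < h then Tt m (h-1) b else 0)"
  proof (cases "0 < h")
    case True
    have "b + h - 1 = b + (h - 1)" "j = m - (h - 1) - 2*b" "2*b + (h-1) \<le> m" using True \<open>2*b + h \<le> Suc m\<close> unfolding j_def by auto
    then show ?thesis unfolding Tt_def using True \<open>2*b + h \<le> Suc m\<close> assms by simp
  qed simp
  have t2: "(if 2 \<le> b \<or> j = 0 then num_syt ([b+h, b-1] @ replicate j 1) else 0) =
     (if 2 \<le> b then Tt m (Suc h) (b-1) else 0) + (if b = 1 \<and> m = Suc h then 1 else 0)"
  proof (cases "2 \<le> b")
    case True
    have "b + h = (b - 1) + Suc h" "j = m - Suc h - 2*(b-1)" "1 \<le> b - 1" "2*(b-1) + Suc h \<le> m" using True \<open>2*b + h \<le> Suc m\<close> unfolding j_def by auto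
    then show ?thesis unfolding Tt_def using True \<open>2*b + h \<le> Suc m\<close> assms by simp
  next
    case False
    then have b1: "b = 1" using assms by simp
    have "j = 0 \<longleftrightarrow> m = Suc h" using True b1 unfolding j_def by auto
    then show ?thesis using b1 num_syt_row1 by (auto simp: j_def)
  qed
  have t3: "(if 1 \<le> j then num_syt ([b+h, b] @ replicate (j-1) 1) else 0) = Tt m h b"
    unfolding Tt_def j_def using assms by (auto simp: Suc_diff_le)
  show ?thesis using L sr t1 t2 t3 by simp
qed

definition Sm :: "nat \<Rightarrow> nat \<Rightarrow> nat" where
  "Sm m h = (\<Sum>b<m. Tt m h (Suc b))"

lemma Tt_big: "m < b \<Longrightarrow> Tt m h b = 0"
  unfolding Tt_def by auto

lemma Sm_rec: "Sm (Suc m) h = (if 0 < h then Sm m (h-1) else 0) + Sm m (Suc h) + (if m = Suc h then 1 else 0) + Sm m h"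
proof -
  have "Sm (Suc m) h = (\<Sum>b<Suc m. (if 0 < h then Tt m (h-1) (Suc b) else 0) + (if 2 \<le> Suc b then Tt m (Suc h) b else 0)
     + (if Suc b = 1 \<and> m = Suc h then 1 else 0) + Tt m h (Suc b))"
    unfolding Sm_def by (rule sum.cong[OF refl]) (simp add: Tt_rec)
  also have "\<dots> = (\<Sum>b<Suc m. (if 0 < h then Tt m (h-1) (Suc b) else 0)) + (\<Sum>b<Suc m. (if 2 \<le> Suc b then Tt m (Suc h) b else 0))
     + (\<Sum>b<Suc m. (if Suc b = 1 \<and> m = Suc h then 1 else 0)) + (\<Sum>b<Suc m. Tt m h (Suc b))"
    by (simp add: sum.distrib)
  also have "(\<Sum>b<Suc m. (if 0 < h then Tt m (h-1) (Suc b) else 0)) = (if 0 < h then Sm m (h-1) else 0)"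
    unfolding Sm_def by (simp add: Tt_big)
  also have "(\<Sum>b<Suc m. (if 2 \<le> Suc b then Tt m (Suc h) b else 0)) = Sm m (Suc h)"
    unfolding Sm_def by (simp only: sum.lessThan_Suc_shift) simp
  also have "(\<Sum>b<Suc m. (if Suc b = 1 \<and> m = Suc h then 1 else 0)) = (if m = Suc h then 1 else 0)"
    by (simp only: sum.lessThan_Suc_shift) simp
  also have "(\<Sum>b<Suc m. Tt m h (Suc b)) = Sm m h"
    unfolding Sm_def by (simp add: Tt_big)
  finally show ?thesis .
qed

lemma Sm_Q1: "Sm m h = Q1 m h"
proof (induction m arbitrary: h)
  case 0 then show ?case by (simp add: Sm_def)
next
  case (Suc m) then show ?case by (simp add: Sm_rec)
qed

fun rp :: "nat \<Rightarrow> step list \<Rightarrow> bool" where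
  "rp h [] = (h = 0)"
| "rp h (U # p) = rp (Suc h) p"
| "rp h (F # p) = (0 < h \<and> rp h p)"
| "rp h (D # p) = (0 < h \<and> rp (h - 1) p)"

lemma height_0[simp]: "height p 0 = 0"
  unfolding height_def by simp

lemma height_Cons[simp]: "height (x # p) (Suc i) = step_val x + height p i"
  unfolding height_def sum.lessThan_Suc_shift by simp

lemma all_le_Suc: "(\<forall>i\<le>Suc n. P i) = (P 0 \<and> (\<forall>i\<le>n. P (Suc i)))"
  by (metis Suc_le_mono le0 not0_implies_Suc)

lemma all_less_Suc: "(\<forall>i<Suc n. P i) = (P 0 \<and> (\<forall>i<n. P (Suc i)))"
  by (metis Suc_less_eq zero_less_Suc not0_implies_Suc)

lemma rp_iff: "rp h p \<longleftrightarrow> (\<forall>i\<le>length p. 0 \<le> int h + height p i) \<and> int h + height p (length p) = 0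
   \<and> (\<forall>i<length p. p ! i = F \<longrightarrow> int h + height p i \<noteq> 0)"
proof (induction p arbitrary: h)
  case Nil then show ?case by simp
next
  case (Cons x p)
  show ?case
  proof (cases x)
    case U
    then show ?thesis using Cons.IH[of "Suc h"] by (simp add: all_le_Suc all_less_Suc ac_simps)
  next
    case F
    then show ?thesis using Cons.IH[of h] by (auto simp: all_le_Suc all_less_Suc)
  next
    case D
    show ?thesis
    proof (cases h)
      case 0
      have "\<not> (\<forall>i\<le>length p. 0 \<le> int h + height (x # p) (Suc i))" using 0 D
        by (auto intro!: exI[of _ 0])
      then show ?thesis using D 0 by (simp add: all_le_Suc)
    next
      case (Suc h')
      have e: "int h + (-1) = int h'" using Suc by simp
      show ?thesis using Cons.IH[of h'] D Suc by (simp add: all_le_Suc all_less_Suc e add.assoc[symmetric])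
    qed
  qed
qed

lemma riordan_rp: "riordan_path p \<longleftrightarrow> rp 0 p"
  unfolding riordan_path_def motzkin_path_def rp_iff by simp

lemma UNIV_step: "(UNIV :: step set) = {U, F, D}"
  using step.exhaust by auto

lemma fin_len: "finite {p :: step list. length p = m \<and> Q p}"
proof -
  have "finite {xs :: step list. set xs \<subseteq> UNIV \<and> length xs = m}"
    by (rule finite_lists_length_eq) (simp add: UNIV_step)
  then show ?thesis by (rule finite_subset[rotated]) auto
qed

lemma rp_card: "card {p. length p = m \<and> rp h p} = Pn m h"
proof (induction m arbitrary: h)
  case 0
  have "{p. length p = 0 \<and> rp h p} = (if h = 0 then {[]} else {})" by auto
  then show ?case by simp
next
  case (Suc m)
  define A where "A k = {p. length p = m \<and> rp k p}" for k
  have eq: "{p. length p = Suc m \<and> rp h p} = Cons U ` A (Suc h) \<union> (if 0 < h then Cons F ` A h \<union> Cons D ` A (h - 1) else {})"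
  proof (intro equalityI subsetI)
    fix p assume "p \<in> {p. length p = Suc m \<and> rp h p}"
    then obtain x q where p: "p = x # q" "length q = m" "rp h (x # q)" by (auto simp: length_Suc_conv)
    then show "p \<in> Cons U ` A (Suc h) \<union> (if 0 < h then Cons F ` A h \<union> Cons D ` A (h - 1) else {})"
      by (cases x) (auto simp: A_def)
  qed (auto simp: A_def split: if_splits)
  have fA: "finite (A k)" for k unfolding A_def by (rule fin_len)
  have cA: "card (Cons x ` A k) = card (A k)" for x k by (rule card_image) simp
  show ?case
  proof (cases "0 < h")
    case False
    then show ?thesis using eq cA Suc.IH unfolding A_def by simp
  next
    case True
    have "card {p. length p = Suc m \<and> rp h p} = card (Cons U ` A (Suc h)) + card (Cons F ` A h \<union> Cons D ` A (h - 1))"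
      unfolding eq using True by (simp, intro card_Un_disjoint) (use fA in auto)
    also have "\<dots> = card (A (Suc h)) + (card (A h) + card (A (h - 1)))"
      using cA by (subst card_Un_disjoint) (use fA in auto)
    finally show ?thesis using True Suc.IH unfolding A_def by simp
  qed
qed

theorem corollary1p3:
  fixes n :: nat
  assumes "n \<ge> 1"
  shows "riordan_num n = (\<Sum>k=1..n div 2. num_syt ([k, k] @ replicate (n - 2*k) 1))"
proof -
  have "riordan_num n = card {p. length p = n \<and> rp 0 p}"
    unfolding riordan_num_def riordan_rp ..
  also have "\<dots> = Pn n 0" by (rule rp_card)
  also have "\<dots> = Q1 n 0" using assms by (simp add: PQ)
  also have "\<dots> = Sm n 0" by (simp add: Sm_Q1)
  also have "\<dots> = (\<Sum>k=1..n. Tt n 0 k)"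
    unfolding Sm_def by (simp add: sum.atLeast1_atMost_eq)
  also have "\<dots> = (\<Sum>k=1..n div 2. Tt n 0 k)"
    by (rule sum.mono_neutral_right) (auto simp: Tt_def)
  also have "\<dots> = (\<Sum>k=1..n div 2. num_syt ([k, k] @ replicate (n - 2*k) 1))"
    by (rule sum.cong[OF refl]) (auto simp: Tt_def)
  finally show ?thesis .
qed

end
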